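(* Let $H=E+D$ and $K=E'+D'$ be closed additive subgroups of $\mathbb{R}^{n}$ (with decompositions as in the context) and let $f:H\to K$ be a homomorphism of closed additive groups. Then: (i) if $f$ is injective, $|\widetilde{\mathrm{dim}}(H)|\leq|\widetilde{\mathrm{dim}}(K)|$; (ii) if $f$ is surjective, $|\widetilde{\mathrm{dim}}(H)|\geq|\widetilde{\mathrm{dim}}(K)|$; (iii) if $f$ is invertible, $\widetilde{\mathrm{dim}}(H)=\widetilde{\mathrm{dim}}(K)$; (iv) $f(H)$ is a closed additive subgroup of $K$; (v) for every closed subgroup $L$ of $K$, $f^{-1}(L)$ is a closed additive subgroup of $H$.
   Context: Every closed additive subgroup $H$ of $\mathbb{R}^n$ can be written $H=E+D$ with $E$ a vector subspace and $D$ a discrete additive subgroup with $E\cap\mathrm{vect}(D)=\{0\}$ ($\mathrm{vect}$ = real span); such decompositions $H=E+D$, $K=E'+D'$ are fixed. A map $f:H\to K$ is a homomorphism of closed additive groups if $f=f_1\oplus f_2$ with $f_1:E\to E'$ linear and $f_2:D\to D'$ a group homomorphism, i.e. $f(\lambda x+ py)=\lambda f_1(x)+pf_2(y)$ for all $\lambda\in\mathbb{R}$, $p\in\mathbb{Z}$, $x\in E$, $y\in D$. It is an isomorphism of closed additive groups if it is invertible. For an additive subgroup $G$, $\widetilde{\mathrm{dim}}(G):=p+i(q-p)$ where $p=\max\{\dim V: V\text{ a vector subspace},\ V\subset G\}$, $q=\dim\mathrm{vect}(G)$; $|\cdot|$ is the complex modulus. *)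

theory Defs
  imports "HOL-Analysis.Analysis"
begin

definition additive_subgroup :: "'a::real_vector set \<Rightarrow> bool" where
  "additive_subgroup G \<longleftrightarrow> 0 \<in> G \<and> (\<forall>x\<in>G. \<forall>y\<in>G. x + y \<in> G) \<and> (\<forall>x\<in>G. - x \<in> G)"

definition closed_additive_subgroup :: "'a::real_normed_vector set \<Rightarrow> bool" where
  "closed_additive_subgroup G \<longleftrightarrow> closed G \<and> additive_subgroup G"

definition closed_group_decomp :: "'a::euclidean_space set \<Rightarrow> 'a set \<Rightarrow> 'a set \<Rightarrow> bool" where
  "closed_group_decomp H E D \<longleftrightarrow>
     subspace E \<and> additive_subgroup D \<and> discrete D \<and> E \<inter> span D = {0} \<and>
     H = {x + y | x y. x \<in> E \<and> y \<in> D}"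

definition closed_group_hom ::
  "'a::euclidean_space set \<Rightarrow> 'a set \<Rightarrow> 'a set \<Rightarrow> 'a set \<Rightarrow> ('a \<Rightarrow> 'a) \<Rightarrow> bool" where
  "closed_group_hom E D E' D' f \<longleftrightarrow>
     (\<exists>f1 f2.
        f1 ` E \<subseteq> E' \<and>
        (\<forall>x\<in>E. \<forall>y\<in>E. f1 (x + y) = f1 x + f1 y) \<and>
        (\<forall>c. \<forall>x\<in>E. f1 (c *\<^sub>R x) = c *\<^sub>R f1 x) \<and>
        f2 ` D \<subseteq> D' \<and>
        (\<forall>x\<in>D. \<forall>y\<in>D. f2 (x + y) = f2 x + f2 y) \<and>
        (\<forall>x\<in>E. \<forall>y\<in>D. f (x + y) = f1 x + f2 y))"

definition tdim :: "'a::euclidean_space set \<Rightarrow> complex" where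
  "tdim G = (let p = Max {dim V | V. subspace V \<and> V \<subseteq> G};
                 q = dim (span G)
             in Complex (real p) (real q - real p))"

end

theory Submission
  imports Defs
begin


lemma asg_0: "additive_subgroup D \<Longrightarrow> 0 \<in> D" by (simp add: additive_subgroup_def)
lemma asg_add: "additive_subgroup D \<Longrightarrow> x \<in> D \<Longrightarrow> y \<in> D \<Longrightarrow> x + y \<in> D" by (simp add: additive_subgroup_def)
lemma asg_neg: "additive_subgroup D \<Longrightarrow> x \<in> D \<Longrightarrow> - x \<in> D" by (simp add: additive_subgroup_def)
lemma asg_diff: "additive_subgroup D \<Longrightarrow> x \<in> D \<Longrightarrow> y \<in> D \<Longrightarrow> x - y \<in> D"
  using asg_add[of D x "-y"] asg_neg[of D y] by simp

lemma asg_nat: assumes "additive_subgroup D" "x \<in> D" shows "of_nat n *\<^sub>R x \<in> D"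
  by (induction n) (auto simp: asg_0[OF assms(1)] algebra_simps intro: asg_add[OF assms(1)] assms(2))

lemma asg_int: assumes "additive_subgroup D" "x \<in> D" shows "of_int k *\<^sub>R x \<in> D"
proof (cases "k \<ge> 0")
  case True then show ?thesis using asg_nat[OF assms, of "nat k"] by simp
next
  case False
  then have "of_int k *\<^sub>R x = - (of_nat (nat (-k)) *\<^sub>R x)" by simp
  then show ?thesis using asg_neg[OF assms(1) asg_nat[OF assms, of "nat (-k)"]] by simp
qed

lemma asg_sum: assumes "additive_subgroup D" "\<And>i. i \<in> S \<Longrightarrow> v i \<in> D"
  shows "(\<Sum>i\<in>S. of_int (k i) *\<^sub>R v i) \<in> D"
  using assms(2)
proof (induction S rule: infinite_finite_induct)
  case (infinite A) then show ?case using asg_0[OF assms(1)] by simp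
next
  case empty then show ?case using asg_0[OF assms(1)] by simp
next
  case (insert x F) then show ?case by (simp add: asg_add[OF assms(1)] asg_int[OF assms(1)])
qed

definition ghom_on where "ghom_on D g \<longleftrightarrow> (\<forall>x\<in>D. \<forall>y\<in>D. g (x + y) = g x + g y)"

lemma ghom_0: fixes g :: "'a::real_vector \<Rightarrow> 'b::real_vector" assumes "additive_subgroup D" "ghom_on D g" shows "g 0 = 0"
  using assms asg_0[OF assms(1)] unfolding ghom_on_def by (metis add.right_neutral add_left_cancel)

lemma ghom_neg: fixes g :: "'a::real_vector \<Rightarrow> 'b::real_vector" assumes "additive_subgroup D" "ghom_on D g" "x \<in> D" shows "g (- x) = - g x"
proof -
  have "g (x + - x) = g x + g (-x)" using assms asg_neg unfolding ghom_on_def by blast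
  then show ?thesis using ghom_0[OF assms(1,2)] by (metis add.commute add_eq_0_iff2 eq_neg_iff_add_eq_0)
qed

lemma ghom_nat: fixes g :: "'a::real_vector \<Rightarrow> 'b::real_vector" assumes "additive_subgroup D" "ghom_on D g" "x \<in> D" shows "g (of_nat n *\<^sub>R x) = of_nat n *\<^sub>R g x"
proof (induction n)
  case 0 then show ?case using ghom_0[OF assms(1,2)] by simp
next
  case (Suc n)
  have "g (of_nat (Suc n) *\<^sub>R x) = g (of_nat n *\<^sub>R x + x)" by (simp add: algebra_simps)
  also have "\<dots> = g (of_nat n *\<^sub>R x) + g x" using assms asg_nat unfolding ghom_on_def by blast
  finally show ?case using Suc by (simp add: algebra_simps)
qed

lemma ghom_int: fixes g :: "'a::real_vector \<Rightarrow> 'b::real_vector" assumes "additive_subgroup D" "ghom_on D g" "x \<in> D" shows "g (of_int k *\<^sub>R x) = of_int k *\<^sub>R g x"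
proof (cases "k \<ge> 0")
  case True then show ?thesis using ghom_nat[OF assms, of "nat k"] by simp
next
  case False
  then have e: "of_int k *\<^sub>R x = - (of_nat (nat (-k)) *\<^sub>R x)" by simp
  show ?thesis unfolding e
    using ghom_neg[OF assms(1,2) asg_nat[OF assms(1,3), of "nat (-k)"]] ghom_nat[OF assms, of "nat (-k)"] False
    by simp
qed

lemma ghom_sum: fixes g :: "'a::real_vector \<Rightarrow> 'b::real_vector" assumes "additive_subgroup D" "ghom_on D g" "\<And>i. i \<in> S \<Longrightarrow> v i \<in> D"
  shows "g (\<Sum>i\<in>S. of_int (k i) *\<^sub>R v i) = (\<Sum>i\<in>S. of_int (k i) *\<^sub>R g (v i))"
  using assms(3)
proof (induction S rule: infinite_finite_induct)
  case (infinite A) then show ?case using ghom_0[OF assms(1,2)] by simp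
next
  case empty then show ?case using ghom_0[OF assms(1,2)] by simp
next
  case (insert x F)
  have "g (\<Sum>i\<in>insert x F. of_int (k i) *\<^sub>R v i) = g (of_int (k x) *\<^sub>R v x + (\<Sum>i\<in>F. of_int (k i) *\<^sub>R v i))"
    using insert by simp
  also have "\<dots> = g (of_int (k x) *\<^sub>R v x) + g (\<Sum>i\<in>F. of_int (k i) *\<^sub>R v i)"
  proof -
    have "(\<Sum>i\<in>F. of_int (k i) *\<^sub>R v i) \<in> D" using asg_sum[OF assms(1), of F v k] insert by simp
    moreover have "of_int (k x) *\<^sub>R v x \<in> D" using asg_int[OF assms(1)] insert by simp
    ultimately show ?thesis using assms(2) unfolding ghom_on_def by simp
  qed
  finally show ?case using insert ghom_int[OF assms(1,2)] by simp
qed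



lemma disc_gap: fixes D :: "'a::euclidean_space set"
  assumes "additive_subgroup D" "discrete D" shows "\<exists>e>0. \<forall>y\<in>D. norm y < e \<longrightarrow> y = 0"
proof -
  have "0 isolated_in D" using discreteD[OF assms(2) asg_0[OF assms(1)]] .
  then obtain d where "d > 0" "\<And>y. y \<in> D \<Longrightarrow> dist 0 y < d \<Longrightarrow> y = 0" by (rule isolated_inE_dist) blast
  then show ?thesis by (metis dist_0_norm)
qed

lemma gap_evconst: fixes b :: "nat \<Rightarrow> 'a::real_normed_vector"
  assumes "e > 0" "\<forall>y\<in>D. norm y < e \<longrightarrow> y = 0" "\<And>m n. b m - b n \<in> D" "Cauchy b"
  shows "\<exists>N. \<forall>n\<ge>N. b n = b N"
proof -
  obtain N where N: "\<And>m n. m \<ge> N \<Longrightarrow> n \<ge> N \<Longrightarrow> dist (b m) (b n) < e"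
    using assms(1,4) unfolding Cauchy_def by blast
  have "b n = b N" if "n \<ge> N" for n
    using N[OF that order_refl] assms(2) assms(3)[of n N] by (metis dist_norm eq_iff_diff_eq_0)
  then show ?thesis by blast
qed

lemma zindep_indep: fixes D :: "'a::euclidean_space set"
  assumes D: "additive_subgroup D" "discrete D" and fin: "finite B" and BD: "B \<subseteq> D"
    and Z: "\<And>k::'a\<Rightarrow>int. (\<Sum>v\<in>B. of_int (k v) *\<^sub>R v) = 0 \<Longrightarrow> \<forall>v\<in>B. k v = 0"
  shows "independent B"
  unfolding independent_explicit
proof (intro conjI fin allI impI ballI)
  fix c v0 assume sum0: "(\<Sum>v\<in>B. c v *\<^sub>R v) = 0" and v0: "v0 \<in> B"
  show "c v0 = 0"
  proof (rule ccontr)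
  assume cv0: "c v0 \<noteq> 0"
  obtain e where e: "e > 0" "\<forall>y\<in>D. norm y < e \<longrightarrow> y = 0" using disc_gap[OF D] by auto
  define k where "k t v = round (real t * c v)" for t :: nat and v
  define P where "P t = (\<Sum>v\<in>B. of_int (k t v) *\<^sub>R v)" for t
  define C where "C = (\<Sum>v\<in>B. norm v)"
  have PD: "P t \<in> D" for t unfolding P_def by (rule asg_sum[OF D(1)]) (use BD in auto)
  have Pb: "P t \<in> cball 0 C" for t
  proof -
    have "(\<Sum>v\<in>B. (real t * c v) *\<^sub>R v) = real t *\<^sub>R (\<Sum>v\<in>B. c v *\<^sub>R v)"
      by (simp add: scaleR_sum_right)
    then have z: "(\<Sum>v\<in>B. (real t * c v) *\<^sub>R v) = 0" using sum0 by simp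
    have "P t = (\<Sum>v\<in>B. (of_int (k t v) - real t * c v) *\<^sub>R v)"
      unfolding P_def using z by (simp add: scaleR_diff_left sum_subtractf)
    then have "norm (P t) \<le> (\<Sum>v\<in>B. norm ((of_int (k t v) - real t * c v) *\<^sub>R v))"
      using norm_sum by metis
    also have "\<dots> \<le> (\<Sum>v\<in>B. norm v)"
    proof (rule sum_mono)
      fix v assume "v \<in> B"
      have "\<bar>of_int (k t v) - real t * c v\<bar> \<le> 1/2" unfolding k_def by (rule of_int_round_abs_le)
      then have "\<bar>of_int (k t v) - real t * c v\<bar> * norm v \<le> 1 * norm v"
        by (intro mult_right_mono) auto
      then show "norm ((of_int (k t v) - real t * c v) *\<^sub>R v) \<le> norm v" by simp
    qed
    finally show ?thesis by (simp add: C_def)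
  qed
  have "seq_compact (cball (0::'a) C)" by (simp add: compact_imp_seq_compact)
  then obtain l r where r: "strict_mono r" "(P \<circ> r) \<longlonglongrightarrow> l"
    using Pb unfolding seq_compact_def by blast
  have Ca: "Cauchy (P \<circ> r)" using r(2) by (rule LIMSEQ_imp_Cauchy)
  have Di: "(P \<circ> r) m - (P \<circ> r) n \<in> D" for m n using PD asg_diff[OF D(1)] by simp
  have "\<exists>N. \<forall>n\<ge>N. (P \<circ> r) n = (P \<circ> r) N"
    by (rule gap_evconst[OF e(1) e(2) Di Ca])
  then obtain N where N: "\<forall>n\<ge>N. (P \<circ> r) n = (P \<circ> r) N" by (rule exE)
  have keq: "k (r n) v0 = k (r N) v0" if "n \<ge> N" for n
  proof -
    have "(P \<circ> r) n = (P \<circ> r) N" by (rule N[rule_format, OF that])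
    then have "P (r n) - P (r N) = 0" by simp
    then have "(\<Sum>v\<in>B. of_int (k (r n) v - k (r N) v) *\<^sub>R v) = 0"
      unfolding P_def by (simp add: scaleR_diff_left sum_subtractf)
    then show ?thesis using Z[of "\<lambda>v. k (r n) v - k (r N) v"] v0 by simp
  qed
  define M :: real where "M = \<bar>of_int (k (r N) v0)\<bar> + 1/2"
  define n where "n = max N (nat \<lceil>M / \<bar>c v0\<bar>\<rceil> + 1)"
  have "n \<ge> N" unfolding n_def by simp
  have rn: "real (r n) \<ge> real n" using seq_suble[OF r(1)] by simp
  have "real n \<ge> real (nat \<lceil>M / \<bar>c v0\<bar>\<rceil> + 1)" unfolding n_def by linarith
  moreover have "M / \<bar>c v0\<bar> \<le> real (nat \<lceil>M / \<bar>c v0\<bar>\<rceil>)" by (rule real_nat_ceiling_ge)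
  ultimately have "real n > M / \<bar>c v0\<bar>" by simp
  then have "real n * \<bar>c v0\<bar> > M" using cv0 by (simp add: field_simps)
  then have big: "\<bar>real (r n) * c v0\<bar> > M" using rn cv0
  proof -
    have "real n * \<bar>c v0\<bar> \<le> real (r n) * \<bar>c v0\<bar>" using rn by (intro mult_right_mono) auto
    then show ?thesis using \<open>real n * \<bar>c v0\<bar> > M\<close> by (simp add: abs_mult)
  qed
  have "\<bar>of_int (k (r n) v0) - real (r n) * c v0\<bar> \<le> 1/2" unfolding k_def by (rule of_int_round_abs_le)
  then have "\<bar>real (r n) * c v0\<bar> \<le> \<bar>of_int (k (r n) v0)\<bar> + 1/2" by linarith
  then show False using big keq[OF \<open>n \<ge> N\<close>] unfolding M_def by simp
  qed
qed



lemma unique_dec: fixes x :: "'a::real_vector"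
  assumes "subspace E" "subspace F" "E \<inter> F = {0}" "x \<in> E" "x' \<in> E" "y \<in> F" "y' \<in> F" "x + y = x' + y'"
  shows "x = x' \<and> y = y'"
proof -
  have "x - x' = y' - y" using assms(8) by (simp add: algebra_simps)
  moreover have "x - x' \<in> E" using assms by (simp add: subspace_diff)
  moreover have "y' - y \<in> F" using assms by (simp add: subspace_diff)
  ultimately have "x - x' \<in> E \<inter> F" by simp
  then have "x - x' = 0" using assms(3) by simp
  then show ?thesis using assms(8) by simp
qed

lemma dim_zero_set: "dim {0::'a::euclidean_space} = 0"
  by (metis dim_empty dim_span span_empty)

lemma decomp_facts: assumes "closed_group_decomp H E D"
  shows "subspace E" "additive_subgroup D" "discrete D" "E \<inter> span D = {0}"
    "H = {x + y | x y. x \<in> E \<and> y \<in> D}"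
  using assms unfolding closed_group_decomp_def by auto

lemma sub_in_E: fixes H :: "'a::euclidean_space set"
  assumes dec: "closed_group_decomp H E D" and V: "subspace V" "V \<subseteq> H"
  shows "V \<subseteq> E"
proof
  fix v assume v: "v \<in> V"
  note df = decomp_facts[OF dec]
  obtain e where e: "e > 0" "\<forall>y\<in>D. norm y < e \<longrightarrow> y = 0" using disc_gap[OF df(2,3)] by auto
  obtain x y where xy: "v = x + y" "x \<in> E" "y \<in> D" using v V df(5) by auto
  show "v \<in> E"
  proof (cases "y = 0")
    case True then show ?thesis using xy by simp
  next
    case False
    define t where "t = e / (2 * norm y)"
    have t0: "t > 0" using e False by (simp add: t_def)
    have "t *\<^sub>R v \<in> H" using V v by (auto simp: subspace_scale)
    then obtain x' y' where x'y': "t *\<^sub>R v = x' + y'" "x' \<in> E" "y' \<in> D" using df(5) by auto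
    have "t *\<^sub>R v = t *\<^sub>R x + t *\<^sub>R y" using xy by (simp add: scaleR_right_distrib)
    moreover have "t *\<^sub>R x \<in> E" using df(1) xy by (simp add: subspace_scale)
    moreover have "t *\<^sub>R y \<in> span D" by (rule span_scale[OF span_base[OF xy(3)]])
    moreover have "y' \<in> span D" by (rule span_base[OF x'y'(3)])
    ultimately have "t *\<^sub>R y = y'"
      using unique_dec[OF df(1) subspace_span df(4), of "t *\<^sub>R x" x' "t *\<^sub>R y" y'] x'y'(1,2) by metis
    then have tyD: "t *\<^sub>R y \<in> D" using x'y' by simp
    have "norm (t *\<^sub>R y) = e / 2" using t0 False e by (simp add: t_def)
    then have "norm (t *\<^sub>R y) < e" using e by simp
    then have "t *\<^sub>R y = 0" using e(2) tyD by blast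
    then show ?thesis using t0 False by simp
  qed
qed

lemma span_decomp: fixes H :: "'a::euclidean_space set"
  assumes dec: "closed_group_decomp H E D"
  shows "span H = {x + y | x y. x \<in> E \<and> y \<in> span D}"
proof -
  note df = decomp_facts[OF dec]
  have ED: "E \<subseteq> H" using df(5) asg_0[OF df(2)] by force
  have DH: "D \<subseteq> H" using df(5) subspace_0[OF df(1)] by force
  show ?thesis
  proof (rule span_subspace)
    show "H \<subseteq> {x + y |x y. x \<in> E \<and> y \<in> span D}" using df(5) span_base by fastforce
    show "subspace {x + y |x y. x \<in> E \<and> y \<in> span D}" by (rule subspace_sums[OF df(1) subspace_span])
    show "{x + y |x y. x \<in> E \<and> y \<in> span D} \<subseteq> span H"
    proof clarify
      fix x y assume "x \<in> E" "y \<in> span D"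
      then have "x \<in> span H" "y \<in> span H" using ED span_base span_mono[OF DH] by auto
      then show "x + y \<in> span H" by (rule span_add)
    qed
  qed
qed

lemma tdim_eq: fixes H :: "'a::euclidean_space set"
  assumes dec: "closed_group_decomp H E D"
  shows "tdim H = Complex (real (dim E)) (real (dim D))"
proof -
  note df = decomp_facts[OF dec]
  have ED: "E \<subseteq> H" using df(5) asg_0[OF df(2)] by force
  let ?S = "{dim V | V. subspace V \<and> V \<subseteq> H}"
  have le: "n \<le> dim E" if nS: "n \<in> ?S" for n
  proof -
    obtain V where "n = dim V" "subspace V" "V \<subseteq> H" using nS by auto
    then show ?thesis using sub_in_E[OF dec] by (simp add: dim_subset)
  qed
  have "Max ?S = dim E"
  proof (rule Max_eqI)
    show "finite ?S" using le by (meson finite_atMost finite_subset subsetI atMost_iff)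
    show "n \<le> dim E" if "n \<in> ?S" for n using le that .
    show "dim E \<in> ?S" using df(1) ED by auto
  qed
  moreover have "dim (span H) = dim E + dim D"
  proof -
    have "dim {x + y | x y. x \<in> E \<and> y \<in> span D} + dim (E \<inter> span D) = dim E + dim (span D)"
      by (rule dim_sums_Int[OF df(1) subspace_span])
    then show ?thesis using span_decomp[OF dec] df(4) dim_zero_set by simp
  qed
  ultimately show ?thesis unfolding tdim_def Let_def by simp
qed



lemma gap_delta: fixes E :: "'a::euclidean_space set"
  assumes E: "subspace E" and F: "subspace F" and EF: "E \<inter> F = {0}"
  shows "\<exists>\<delta>>0. \<forall>a\<in>E. \<forall>b\<in>F. \<delta> * norm b \<le> norm (a + b)"
proof (cases "F \<subseteq> {0}")
  case True then show ?thesis by (intro exI[of _ 1]) auto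
next
  case False
  then obtain b1 where b1: "b1 \<in> F" "b1 \<noteq> 0" by auto
  define S where "S = F \<inter> sphere 0 1"
  have cS: "compact S" unfolding S_def using closed_Int_compact[OF closed_subspace[OF F] compact_sphere] .
  have "b1 /\<^sub>R norm b1 \<in> S" unfolding S_def using b1 by (simp add: subspace_scale[OF F])
  then have neS: "S \<noteq> {}" by auto
  have "continuous_on S (\<lambda>x. infdist x E)" by (intro continuous_intros)
  then have "\<exists>x\<in>S. \<forall>y\<in>S. infdist x E \<le> infdist y E" by (rule continuous_attains_inf[OF cS neS])
  then obtain b0 where b0: "b0 \<in> S" "\<forall>y\<in>S. infdist b0 E \<le> infdist y E"
    by (rule bexE)
  have "b0 \<notin> E"
  proof
    assume "b0 \<in> E"
    then have "b0 \<in> E \<inter> F" using b0(1) unfolding S_def by simp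
    then have "b0 = 0" using EF by simp
    then show False using b0(1) unfolding S_def by simp
  qed
  then have m: "infdist b0 E > 0"
    using infdist_pos_not_in_closed[OF closed_subspace[OF E]] subspace_0[OF E] by auto
  show ?thesis
  proof (intro exI[of _ "infdist b0 E"] conjI m ballI)
    fix a b assume a: "a \<in> E" and b: "b \<in> F"
    show "infdist b0 E * norm b \<le> norm (a + b)"
    proof (cases "b = 0")
      case True then show ?thesis by simp
    next
      case False
      have nb: "norm b > 0" using False by simp
      define u where "u = b /\<^sub>R norm b"
      have uS: "u \<in> S" unfolding S_def u_def using False b by (simp add: subspace_scale[OF F])
      have ma: "- (a /\<^sub>R norm b) \<in> E" using a E by (simp add: subspace_neg subspace_scale)
      have "infdist u E \<le> dist u (- (a /\<^sub>R norm b))" by (rule infdist_le[OF ma])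
      also have "dist u (- (a /\<^sub>R norm b)) = norm ((a + b) /\<^sub>R norm b)"
        unfolding u_def dist_norm by (simp add: algebra_simps scaleR_right_distrib)
      also have "\<dots> = norm (a + b) / norm b" by (simp add: divide_inverse_commute)
      finally have "infdist b0 E \<le> norm (a + b) / norm b" using b0(2)[rule_format, OF uS] by linarith
      then show ?thesis using nb by (simp add: field_simps)
    qed
  qed
qed

lemma seq_split: fixes a b :: "nat \<Rightarrow> 'a::euclidean_space"
  assumes E: "subspace E" and F: "subspace F" and EF: "E \<inter> F = {0}"
    and e: "e > 0" "\<forall>y\<in>D. norm y < e \<longrightarrow> y = 0"
    and aE: "\<And>n. a n \<in> E" and bF: "\<And>n. b n \<in> F" and bD: "\<And>m n. b m - b n \<in> D"
    and lim: "(\<lambda>n. a n + b n) \<longlonglongrightarrow> z"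
  shows "\<exists>N. (\<forall>n\<ge>N. b n = b N) \<and> (\<lambda>n. a (n + N)) \<longlonglongrightarrow> z - b N"
proof -
  obtain \<delta> where d: "\<delta> > 0" "\<forall>a\<in>E. \<forall>b\<in>F. \<delta> * norm b \<le> norm (a + b)"
    using gap_delta[OF E F EF] by auto
  have Cx: "Cauchy (\<lambda>n. a n + b n)" using lim by (rule LIMSEQ_imp_Cauchy)
  have "Cauchy b"
  proof (rule CauchyI)
    fix \<epsilon> :: real assume "\<epsilon> > 0"
    then have "\<delta> * \<epsilon> > 0" using d by simp
    then obtain M where M: "\<And>m n. m \<ge> M \<Longrightarrow> n \<ge> M \<Longrightarrow> dist (a m + b m) (a n + b n) < \<delta> * \<epsilon>"
      using Cx unfolding Cauchy_def by meson
    have "norm (b m - b n) < \<epsilon>" if "m \<ge> M" "n \<ge> M" for m n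
    proof -
      have "a m - a n \<in> E" using aE E by (simp add: subspace_diff)
      moreover have "b m - b n \<in> F" using bF F by (simp add: subspace_diff)
      ultimately have "\<delta> * norm (b m - b n) \<le> norm ((a m - a n) + (b m - b n))" using d(2) by blast
      also have "\<dots> = dist (a m + b m) (a n + b n)" by (simp add: dist_norm algebra_simps)
      also have "\<dots> < \<delta> * \<epsilon>" using M that by simp
      finally show ?thesis using d(1) by simp
    qed
    then show "\<exists>M. \<forall>m\<ge>M. \<forall>n\<ge>M. norm (b m - b n) < \<epsilon>" by blast
  qed
  then have "\<exists>N. \<forall>n\<ge>N. b n = b N" by (intro gap_evconst[OF e(1) e(2)] bD)
  then obtain N where N: "\<forall>n\<ge>N. b n = b N" by (rule exE)
  have "(\<lambda>n. a (n + N) + b (n + N)) \<longlonglongrightarrow> z" using LIMSEQ_ignore_initial_segment[OF lim, of N] .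
  then have "(\<lambda>n. (a (n + N) + b (n + N)) - b N) \<longlonglongrightarrow> z - b N" by (intro tendsto_diff tendsto_const)
  moreover have "(a (n + N) + b (n + N)) - b N = a (n + N)" for n using N[rule_format, of "n + N"] by simp
  ultimately have "(\<lambda>n. a (n + N)) \<longlonglongrightarrow> z - b N" by simp
  then show ?thesis using N by blast
qed

lemma closed_sum: fixes E :: "'a::euclidean_space set"
  assumes E: "subspace E" and F: "subspace F" and EF: "E \<inter> F = {0}"
    and e: "e > 0" "\<forall>y\<in>D. norm y < e \<longrightarrow> y = 0"
    and V: "subspace V" "V \<subseteq> E" and L: "L \<subseteq> F" "\<And>x y. x \<in> L \<Longrightarrow> y \<in> L \<Longrightarrow> x - y \<in> D"
  shows "closed {x + y | x y. x \<in> V \<and> y \<in> L}"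
  unfolding closed_sequential_limits
proof (intro allI impI, elim conjE)
  fix s z assume s: "\<forall>n. s n \<in> {x + y | x y. x \<in> V \<and> y \<in> L}" and lim: "s \<longlonglongrightarrow> z"
  have "\<forall>n. \<exists>p. s n = fst p + snd p \<and> fst p \<in> V \<and> snd p \<in> L" using s by fastforce
  then obtain p where p: "\<And>n. s n = fst (p n) + snd (p n)" "\<And>n. fst (p n) \<in> V" "\<And>n. snd (p n) \<in> L"
    by metis
  define a where "a n = fst (p n)" for n
  define b where "b n = snd (p n)" for n
  have "s = (\<lambda>n. a n + b n)" by (rule ext) (simp add: p(1) a_def b_def)
  then have lim2: "(\<lambda>n. a n + b n) \<longlonglongrightarrow> z" using lim by simp
  have aE: "a n \<in> E" for n using p(2) V(2) unfolding a_def by auto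
  have bF: "b n \<in> F" for n using p(3) L(1) unfolding b_def by auto
  have bD: "b m - b n \<in> D" for m n using p(3) L(2) unfolding b_def by auto
  obtain N where N: "\<forall>n\<ge>N. b n = b N" "(\<lambda>n. a (n + N)) \<longlonglongrightarrow> z - b N"
    using seq_split[OF E F EF e aE bF bD lim2] by metis
  have "z - b N \<in> V"
    by (rule closed_sequentially[OF closed_subspace[OF V(1)] _ N(2)]) (use p(2) a_def in auto)
  moreover have "b N \<in> L" using p(3) b_def by auto
  ultimately show "z \<in> {x + y | x y. x \<in> V \<and> y \<in> L}"
    by (metis (mono_tags, lifting) diff_add_cancel mem_Collect_eq)
qed

lemma lin_extend: fixes f1 :: "'a::euclidean_space \<Rightarrow> 'b::euclidean_space"
  assumes E: "subspace E" and add: "\<forall>x\<in>E. \<forall>y\<in>E. f1 (x + y) = f1 x + f1 y"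
    and sc: "\<forall>c. \<forall>x\<in>E. f1 (c *\<^sub>R x) = c *\<^sub>R f1 x"
  shows "\<exists>g. linear g \<and> (\<forall>x\<in>E. g x = f1 x)"
proof -
  obtain B where B: "B \<subseteq> E" "independent B" "E \<subseteq> span B" "card B = dim E" by (rule basis_exists)
  obtain g where g: "linear g" "\<forall>x\<in>B. g x = f1 x" using linear_independent_extend[OF B(2)] by auto
  have f10: "f1 0 = 0" using sc subspace_0[OF E] by (metis scale_zero_left)
  have sub: "subspace {x. x \<in> E \<and> g x = f1 x}"
    unfolding subspace_def using E g(1) add sc f10
    by (auto simp: linear_add linear_scale linear_0 subspace_add subspace_scale subspace_0)
  have "x \<in> {x. x \<in> E \<and> g x = f1 x}" if "x \<in> E" for x
    using span_subspace_induct[OF _ sub, of x B] that B(1,3) g(2) by auto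
  then show ?thesis using g(1) by auto
qed



lemma cmod_mono: assumes "0 \<le> a" "a \<le> a'" "0 \<le> b" "b \<le> b'"
  shows "cmod (Complex a b) \<le> cmod (Complex a' b')"
proof -
  have "a^2 + b^2 \<le> a'^2 + b'^2" using assms by (intro add_mono power_mono) auto
  then show ?thesis by (simp add: cmod_def)
qed

theorem theorem1p8:
  fixes H K E D E' D' :: "(real ^ 'n) set" and f :: "real ^ 'n \<Rightarrow> real ^ 'n"
  assumes "closed_additive_subgroup H" and "closed_additive_subgroup K"
    and "closed_group_decomp H E D" and "closed_group_decomp K E' D'"
    and "closed_group_hom E D E' D' f"
  shows "(inj_on f H \<longrightarrow> cmod (tdim H) \<le> cmod (tdim K))
       \<and> (f ` H = K \<longrightarrow> cmod (tdim H) \<ge> cmod (tdim K))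
       \<and> (bij_betw f H K \<longrightarrow> tdim H = tdim K)
       \<and> (f ` H \<subseteq> K \<and> closed_additive_subgroup (f ` H))
       \<and> (\<forall>L. L \<subseteq> K \<and> closed_additive_subgroup L \<longrightarrow>
             closed_additive_subgroup {x \<in> H. f x \<in> L} \<and> {x \<in> H. f x \<in> L} \<subseteq> H)"
proof -
  note dfH = decomp_facts[OF assms(3)]
  note dfK = decomp_facts[OF assms(4)]
  obtain f1 f2 where h1: "f1 ` E \<subseteq> E'" and h2: "\<forall>x\<in>E. \<forall>y\<in>E. f1 (x + y) = f1 x + f1 y"
    and h3: "\<forall>c. \<forall>x\<in>E. f1 (c *\<^sub>R x) = c *\<^sub>R f1 x" and h4: "f2 ` D \<subseteq> D'"
    and h5: "\<forall>x\<in>D. \<forall>y\<in>D. f2 (x + y) = f2 x + f2 y" and h6: "\<forall>x\<in>E. \<forall>y\<in>D. f (x + y) = f1 x + f2 y"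
    using assms(5) unfolding closed_group_hom_def by metis
  obtain g where g: "linear g" "\<forall>x\<in>E. g x = f1 x" using lin_extend[OF dfH(1) h2 h3] by metis
  have gh: "ghom_on D f2" using h5 unfolding ghom_on_def by simp
  have f20: "f2 0 = 0" by (rule ghom_0[OF dfH(2) gh])
  have g0: "g 0 = 0" using g(1) by (simp add: linear_0)
  have fH: "f (x + y) = g x + f2 y" if "x \<in> E" "y \<in> D" for x y using h6 g(2) that by simp
  have gE: "g x \<in> E'" if "x \<in> E" for x using h1 g(2) that by auto
  have f2D: "f2 y \<in> D'" if "y \<in> D" for y using h4 that by auto
  have E0: "0 \<in> E" by (rule subspace_0[OF dfH(1)])
  have D0: "0 \<in> D" by (rule asg_0[OF dfH(2)])
  have E'0: "0 \<in> E'" by (rule subspace_0[OF dfK(1)])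
  have D'0: "0 \<in> D'" by (rule asg_0[OF dfK(2)])
  have EH: "x \<in> H" if "x \<in> E" for x using dfH(5) that D0 by force
  have DH: "y \<in> H" if "y \<in> D" for y using dfH(5) that E0 by force
  have fE: "f x = g x" if "x \<in> E" for x using fH[OF that D0] f20 by simp
  have fD: "f y = f2 y" if "y \<in> D" for y using fH[OF E0 that] g0 by simp
  have tH: "tdim H = Complex (real (dim E)) (real (dim D))" by (rule tdim_eq[OF assms(3)])
  have tK: "tdim K = Complex (real (dim E')) (real (dim D'))" by (rule tdim_eq[OF assms(4)])
  have spE: "span E = E" using dfH(1) by simp
  have uK: "x = x' \<and> y = y'" if "x \<in> E'" "x' \<in> E'" "y \<in> span D'" "y' \<in> span D'" "x + y = x' + y'"
    for x x' y y' using unique_dec[OF dfK(1) subspace_span dfK(4)] that by blast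

  have INJ: "dim E \<le> dim E' \<and> dim D \<le> dim D'" if inj: "inj_on f H"
  proof
    have ig: "inj_on g E" using inj fE EH unfolding inj_on_def by metis
    have "dim (g ` E) = dim E" using dim_image_eq[OF g(1), of E] ig spE by simp
    moreover have "dim (g ` E) \<le> dim E'" using gE by (intro dim_subset) auto
    ultimately show "dim E \<le> dim E'" by simp
    have i2: "inj_on f2 D" using inj fD DH unfolding inj_on_def by metis
    obtain B where B: "B \<subseteq> D" "independent B" "D \<subseteq> span B" "card B = dim D" by (rule basis_exists)
    have fB: "finite B" using B(2) by (simp add: independent_explicit)
    have i2B: "inj_on f2 B" using i2 B(1) by (rule inj_on_subset)
    have "independent (f2 ` B)"
    proof (rule zindep_indep[OF dfK(2,3)])
      show "finite (f2 ` B)" using fB by simp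
      show "f2 ` B \<subseteq> D'" using B(1) f2D by auto
      fix k :: "real^'n \<Rightarrow> int" assume z: "(\<Sum>v\<in>f2 ` B. of_int (k v) *\<^sub>R v) = 0"
      have "(\<Sum>v\<in>f2 ` B. of_int (k v) *\<^sub>R v) = (\<Sum>b\<in>B. of_int (k (f2 b)) *\<^sub>R f2 b)"
        using sum.reindex[OF i2B] by simp
      also have "\<dots> = f2 (\<Sum>b\<in>B. of_int (k (f2 b)) *\<^sub>R b)"
        using ghom_sum[OF dfH(2) gh, of B "\<lambda>b. b" "\<lambda>b. k (f2 b)"] B(1) by (metis subsetD)
      finally have "f2 (\<Sum>b\<in>B. of_int (k (f2 b)) *\<^sub>R b) = f2 0" using z f20 by simp
      moreover have "(\<Sum>b\<in>B. of_int (k (f2 b)) *\<^sub>R b) \<in> D"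
        using asg_sum[OF dfH(2), of B "\<lambda>b. b"] B(1) by (metis subsetD)
      ultimately have "(\<Sum>b\<in>B. of_int (k (f2 b)) *\<^sub>R b) = 0" using i2 D0 unfolding inj_on_def by blast
      then have "\<forall>b\<in>B. real_of_int (k (f2 b)) = 0"
        using spec[OF conjunct2[OF B(2)[unfolded independent_explicit]], of "\<lambda>b. real_of_int (k (f2 b))"] by simp
      then show "\<forall>v\<in>f2 ` B. k v = 0" by auto
    qed
    then have "card (f2 ` B) \<le> dim D'" using B(1) f2D by (intro independent_card_le_dim) auto
    then show "dim D \<le> dim D'" using card_image[OF i2B] B(4) by simp
  qed

  have SURJ: "dim E' \<le> dim E \<and> dim D' \<le> dim D" if surj: "f ` H = K"
  proof
    have pre: "\<exists>x y. x \<in> E \<and> y \<in> D \<and> z = g x + f2 y" if zK: "z \<in> K" for z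
    proof -
      obtain h where "h \<in> H" "z = f h" using surj zK by auto
      then obtain x y where "x \<in> E" "y \<in> D" "h = x + y" using dfH(5) by auto
      then show ?thesis using fH \<open>z = f h\<close> by auto
    qed
    have "E' \<subseteq> g ` E"
    proof
      fix x' assume x': "x' \<in> E'"
      have "x' \<in> K" using dfK(5) x' D'0 by force
      then obtain x y where xy: "x \<in> E" "y \<in> D" "x' = g x + f2 y" using pre by blast
      have "x' = g x" using uK[OF x' gE[OF xy(1)] span_0 span_base[OF f2D[OF xy(2)]]] xy(3) by simp
      then show "x' \<in> g ` E" using xy(1) by auto
    qed
    then have "dim E' \<le> dim (g ` E)" by (rule dim_subset)
    also have "\<dots> \<le> dim E" by (rule dim_image_le[OF g(1)])
    finally show "dim E' \<le> dim E" .
    have D'sub: "\<exists>d\<in>D. f2 d = y'" if y': "y' \<in> D'" for y'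
    proof -
      have "y' \<in> K" using dfK(5) y' E'0 by force
      then obtain x y where xy: "x \<in> E" "y \<in> D" "y' = g x + f2 y" using pre by blast
      have "0 + y' = g x + f2 y" using xy(3) by simp
      then have "y' = f2 y" using uK[OF E'0 gE[OF xy(1)] span_base[OF y'] span_base[OF f2D[OF xy(2)]]] by simp
      then show ?thesis using xy(2) by auto
    qed
    obtain B' where B': "B' \<subseteq> D'" "independent B'" "D' \<subseteq> span B'" "card B' = dim D'" by (rule basis_exists)
    have fB': "finite B'" using B'(2) by (simp add: independent_explicit)
    obtain h where h: "\<forall>b\<in>B'. h b \<in> D \<and> f2 (h b) = b" using D'sub B'(1) by (metis subsetD)
    have ih: "inj_on h B'" using h unfolding inj_on_def by metis
    have hD: "h ` B' \<subseteq> D" using h by auto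
    have "independent (h ` B')"
    proof (rule zindep_indep[OF dfH(2,3)])
      show "finite (h ` B')" using fB' by simp
      show "h ` B' \<subseteq> D" by (rule hD)
      fix k :: "real^'n \<Rightarrow> int" assume z: "(\<Sum>v\<in>h ` B'. of_int (k v) *\<^sub>R v) = 0"
      have "(\<Sum>v\<in>h ` B'. of_int (k v) *\<^sub>R v) = (\<Sum>b\<in>B'. of_int (k (h b)) *\<^sub>R h b)"
        using sum.reindex[OF ih] by simp
      then have "f2 (\<Sum>b\<in>B'. of_int (k (h b)) *\<^sub>R h b) = 0" using z f20 by simp
      moreover have "f2 (\<Sum>b\<in>B'. of_int (k (h b)) *\<^sub>R h b) = (\<Sum>b\<in>B'. of_int (k (h b)) *\<^sub>R f2 (h b))"
        using ghom_sum[OF dfH(2) gh, of B' h "\<lambda>b. k (h b)"] h by auto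
      moreover have "(\<Sum>b\<in>B'. of_int (k (h b)) *\<^sub>R f2 (h b)) = (\<Sum>b\<in>B'. of_int (k (h b)) *\<^sub>R b)"
        using h by (intro sum.cong) auto
      ultimately have "(\<Sum>b\<in>B'. of_int (k (h b)) *\<^sub>R b) = 0" by simp
      then have "\<forall>b\<in>B'. real_of_int (k (h b)) = 0"
        using spec[OF conjunct2[OF B'(2)[unfolded independent_explicit]], of "\<lambda>b. real_of_int (k (h b))"] by simp
      then show "\<forall>v\<in>h ` B'. k v = 0" by auto
    qed
    then have "card (h ` B') \<le> dim D" using hD by (intro independent_card_le_dim) auto
    then show "dim D' \<le> dim D" using card_image[OF ih] B'(4) by simp
  qed

  have fadd: "f (u + v) = f u + f v" if uH: "u \<in> H" and vH: "v \<in> H" for u v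
  proof -
    obtain x y where xy: "x \<in> E" "y \<in> D" "u = x + y" using uH dfH(5) by auto
    obtain x' y' where xy': "x' \<in> E" "y' \<in> D" "v = x' + y'" using vH dfH(5) by auto
    have "u + v = (x + x') + (y + y')" using xy xy' by (simp add: algebra_simps)
    moreover have "x + x' \<in> E" using xy xy' dfH(1) by (simp add: subspace_add)
    moreover have "y + y' \<in> D" using xy xy' dfH(2) by (simp add: asg_add)
    ultimately have "f (u + v) = g (x + x') + f2 (y + y')" using fH by simp
    also have "\<dots> = (g x + f2 y) + (g x' + f2 y')"
      using g(1) h5 xy xy' by (simp add: linear_add algebra_simps)
    finally show ?thesis using fH xy xy' by simp
  qed
  have fneg: "f (- u) = - f u" if uH: "u \<in> H" for u
  proof -
    obtain x y where xy: "x \<in> E" "y \<in> D" "u = x + y" using uH dfH(5) by auto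
    have "- u = (- x) + (- y)" using xy by simp
    moreover have "- x \<in> E" using xy dfH(1) by (simp add: subspace_neg)
    moreover have "- y \<in> D" using xy dfH(2) by (simp add: asg_neg)
    ultimately have "f (- u) = g (- x) + f2 (- y)" using fH by metis
    also have "\<dots> = - (g x + f2 y)" using g(1) ghom_neg[OF dfH(2) gh xy(2)] by (simp add: linear_neg)
    finally show ?thesis using fH xy by simp
  qed
  have f0: "f 0 = 0" using fE[OF E0] g0 by simp
  have Hsg: "additive_subgroup H" using assms(1) unfolding closed_additive_subgroup_def by simp

  have P1: "inj_on f H \<longrightarrow> cmod (tdim H) \<le> cmod (tdim K)"
    using INJ unfolding tH tK by (auto intro!: cmod_mono)
  have P2: "f ` H = K \<longrightarrow> cmod (tdim H) \<ge> cmod (tdim K)"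
    using SURJ unfolding tH tK by (auto intro!: cmod_mono)
  have P3: "bij_betw f H K \<longrightarrow> tdim H = tdim K"
  proof
    assume "bij_betw f H K"
    then have "inj_on f H" "f ` H = K" unfolding bij_betw_def by auto
    then show "tdim H = tdim K" using INJ SURJ unfolding tH tK by (simp add: le_antisym)
  qed

  have fHeq: "f ` H = {x + y | x y. x \<in> g ` E \<and> y \<in> f2 ` D}"
  proof
    show "f ` H \<subseteq> {x + y | x y. x \<in> g ` E \<and> y \<in> f2 ` D}"
    proof
      fix z assume "z \<in> f ` H"
      then obtain x y where "x \<in> E" "y \<in> D" "z = f (x + y)" using dfH(5) by auto
      then show "z \<in> {x + y | x y. x \<in> g ` E \<and> y \<in> f2 ` D}" using fH by auto
    qed
    show "{x + y | x y. x \<in> g ` E \<and> y \<in> f2 ` D} \<subseteq> f ` H"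
    proof clarify
      fix x y assume "x \<in> E" "y \<in> D"
      then show "g x + f2 y \<in> f ` H" using fH dfH(5) by (metis (mono_tags, lifting) image_eqI mem_Collect_eq)
    qed
  qed
  obtain e' where e': "e' > 0" "\<forall>y\<in>D'. norm y < e' \<longrightarrow> y = 0" using disc_gap[OF dfK(2,3)] by auto
  have P4: "f ` H \<subseteq> K \<and> closed_additive_subgroup (f ` H)"
  proof (intro conjI)
    show "f ` H \<subseteq> K" unfolding fHeq dfK(5) using gE f2D by blast
    have "closed {x + y | x y. x \<in> g ` E \<and> y \<in> f2 ` D}"
    proof (rule closed_sum[OF dfK(1) subspace_span dfK(4) e'])
      show "subspace (g ` E)" by (rule linear_subspace_image[OF g(1) dfH(1)])
      show "g ` E \<subseteq> E'" using gE by auto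
      show "f2 ` D \<subseteq> span D'" using f2D span_base by blast
      fix x y assume "x \<in> f2 ` D" "y \<in> f2 ` D"
      then show "x - y \<in> D'" using f2D asg_diff[OF dfK(2)] by auto
    qed
    moreover have "additive_subgroup (f ` H)"
      unfolding additive_subgroup_def
    proof (intro conjI ballI)
      show "0 \<in> f ` H" using f0 EH[OF E0] by force
      fix u v assume "u \<in> f ` H" "v \<in> f ` H"
      then obtain a b where "a \<in> H" "b \<in> H" "u = f a" "v = f b" by auto
      then show "u + v \<in> f ` H" using fadd asg_add[OF Hsg] by (metis image_eqI)
    next
      fix u assume "u \<in> f ` H"
      then obtain a where "a \<in> H" "u = f a" by auto
      then show "- u \<in> f ` H" using fneg asg_neg[OF Hsg] by (metis image_eqI)
    qed
    ultimately show "closed_additive_subgroup (f ` H)"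
      unfolding closed_additive_subgroup_def fHeq by simp
  qed

  obtain eH where eH: "eH > 0" "\<forall>y\<in>D. norm y < eH \<longrightarrow> y = 0" using disc_gap[OF dfH(2,3)] by auto
  have P5: "\<forall>L. L \<subseteq> K \<and> closed_additive_subgroup L \<longrightarrow>
             closed_additive_subgroup {x \<in> H. f x \<in> L} \<and> {x \<in> H. f x \<in> L} \<subseteq> H"
  proof (intro allI impI conjI)
    fix L assume L: "L \<subseteq> K \<and> closed_additive_subgroup L"
    have Lsg: "additive_subgroup L" and Lc: "closed L" using L unfolding closed_additive_subgroup_def by auto
    show "{x \<in> H. f x \<in> L} \<subseteq> H" by auto
    have "additive_subgroup {x \<in> H. f x \<in> L}"
      unfolding additive_subgroup_def
      using f0 asg_0[OF Hsg] asg_0[OF Lsg] fadd fneg asg_add[OF Hsg] asg_neg[OF Hsg] asg_add[OF Lsg] asg_neg[OF Lsg]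
      by auto
    moreover have "closed {x \<in> H. f x \<in> L}"
      unfolding closed_sequential_limits
    proof (intro allI impI, elim conjE)
      fix s z assume s: "\<forall>n. s n \<in> {x \<in> H. f x \<in> L}" and lim: "s \<longlonglongrightarrow> z"
      have "\<forall>n. \<exists>p. s n = fst p + snd p \<and> fst p \<in> E \<and> snd p \<in> D" using s dfH(5) by fastforce
      then obtain p where p: "\<And>n. s n = fst (p n) + snd (p n)" "\<And>n. fst (p n) \<in> E" "\<And>n. snd (p n) \<in> D"
        by metis
      define a where "a n = fst (p n)" for n
      define b where "b n = snd (p n)" for n
      have "s = (\<lambda>n. a n + b n)" by (rule ext) (simp add: p(1) a_def b_def)
      then have lim2: "(\<lambda>n. a n + b n) \<longlonglongrightarrow> z" using lim by simp
      have aE: "a n \<in> E" for n using p(2) unfolding a_def by auto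
      have bD0: "b n \<in> D" for n using p(3) unfolding b_def by auto
      have bF: "b n \<in> span D" for n using bD0 span_base by blast
      have bD: "b m - b n \<in> D" for m n using bD0 asg_diff[OF dfH(2)] by auto
      obtain N where N: "\<forall>n\<ge>N. b n = b N" "(\<lambda>n. a (n + N)) \<longlonglongrightarrow> z - b N"
        using seq_split[OF dfH(1) subspace_span dfH(4) eH aE bF bD lim2] by metis
      have zE: "z - b N \<in> E"
        by (rule closed_sequentially[OF closed_subspace[OF dfH(1)] _ N(2)]) (use aE in auto)
      have zeq: "z = (z - b N) + b N" by simp
      have fz: "f z = g (z - b N) + f2 (b N)" using fH[OF zE bD0[of N]] zeq by metis
      have zH: "z \<in> H" unfolding dfH(5) using zE bD0[of N] zeq by (metis (mono_tags, lifting) mem_Collect_eq)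
      have "(\<lambda>n. g (a (n + N))) \<longlonglongrightarrow> g (z - b N)"
        by (rule isCont_tendsto_compose[OF linear_continuous_at[OF linear_conv_bounded_linear[THEN iffD1, OF g(1)]] N(2)])
      then have "(\<lambda>n. g (a (n + N)) + f2 (b N)) \<longlonglongrightarrow> f z" unfolding fz by (intro tendsto_add tendsto_const)
      moreover have "f (s (n + N)) = g (a (n + N)) + f2 (b N)" for n
      proof -
        have "b (n + N) = b N" by (rule N(1)[rule_format]) simp
        then show ?thesis using \<open>s = _\<close> fH[OF aE bD0[of "n + N"]] by simp
      qed
      ultimately have "(\<lambda>n. f (s (n + N))) \<longlonglongrightarrow> f z" by simp
      moreover have "f (s (n + N)) \<in> L" for n using s by auto
      ultimately have "f z \<in> L" using closed_sequentially[OF Lc] by metis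
      then show "z \<in> {x \<in> H. f x \<in> L}" using zH by simp
    qed
    ultimately show "closed_additive_subgroup {x \<in> H. f x \<in> L}"
      unfolding closed_additive_subgroup_def by simp
  qed
  show ?thesis using P1 P2 P3 P4 P5 by blast
qed


end
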